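(* Let $\epsilon\ge0$, consider prices with $T=1$ and $k_1>\epsilon$, and use the notation $k_0=\epsilon$, $\underline r_0=\underline S_0-2\epsilon$, $\overline r_0=\overline S_0$. Suppose that (i) $\frac{\overline r_l-\underline r_j}{k_l-k_j}\ge\frac{\underline r_j-\overline r_i}{k_j-k_i}$ for all $0\le i<j<l\le N$, (ii) $\frac{\overline r_l-\underline r_i}{k_l-k_i}\ge-1$ for all $0\le i<l\le N$, (iii) $\underline r_j\le\overline r_i$ for all $0\le i<j\le N$, but that there exist $0\le i<j\le N$ with $\overline r_i=\underline r_j>0$. Then the prices admit a weak arbitrage opportunity with respect to spread-bound $\epsilon$ (in particular, no model-independent arbitrage).
   Context: Setting (data) with $T=1$: positive bank account value $B(1)$, $D(1)=1/B(1)$; strikes $0<K_1<\dots<K_N$, discounted $k_i=D(1)K_i$; call bid/ask prices $\underline r_i,\overline r_i>0$; underlying bid/ask $0<\underline S_0\le\overline S_0$. Calls are cash-settled with payoff $(S^C_1-K)^+$. A \emph{model} is a finite filtered probability space with adapted processes $\underline S,\overline S,S^C$, $0<\underline S_t\le S^C_t\le\overline S_t$. A \emph{semi-static portfolio} $\Phi$ consists of reals $\phi^0_0,\phi^1_0$, Borel functions $\phi^0_t,\phi^1_t$ of the observed bid/reference/ask prices up to time $t$ ($1\le t\le T$), and reals $\phi^{t,i}$ (numbers of calls bought at time 0). Self-financing: $\phi^0_t=\phi^0_{t-1}+\sum_i\phi^{t,i}(s^C_t-K_{t,i})^+-(\phi^1_t-\phi^1_{t-1})^+\overline s_t+(\phi^1_t-\phi^1_{t-1})^-\underline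 s_t$. Initial value $r_\Phi=\phi^0_0+(\phi^1_0)^+\overline S_0-(\phi^1_0)^-\underline S_0+\sum_{t,i}((\phi^{t,i})^+\overline r_{t,i}-(\phi^{t,i})^-\underline r_{t,i})$. \emph{Model-independent arbitrage w.r.t. spread-bound $\epsilon$}: a self-financing $\Phi$ with $r_\Phi<0$ and $\phi^0_T\ge0$, $\phi^1_T=0$ for all price values with $0<\underline s_t\le s^C_t\le\overline s_t$, $\overline s_t-\underline s_t\le\epsilon B(t)$, $s^C_t\ge\epsilon B(t)$. \emph{Weak arbitrage w.r.t. spread-bound $\epsilon$}: there is no model-independent arbitrage, but for every model satisfying $\overline S_t-\underline S_t\le\epsilon B(t)$ and $S^C_t\ge\epsilon B(t)$ there is a (self-financing) semi-static $\Phi$ with $r_\Phi\le0$, $\phi^0_T\ge0$ a.s., $\mathbb P(\phi^0_T>0)>0$, and $\phi^1_T=0$ a.s., where $\phi^0_T,\phi^1_T$ are evaluated at the model's price paths. *)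

theory Defs
  imports "HOL-Probability.Probability"
begin

text \<open>Market data:
  B1 (bank account value B(1) > 0, discount factor D(1) = 1/B1),
  N strikes K 1 < ... < K N (indices 1..N), call bid prices rb i, call ask prices ra i,
  underlying bid/ask Sb0 \<le> Sa0 at time 0.
  Prices observed at time 1 are triples (sb, sC, sa): bid, reference, ask.\<close>

definition pos :: "real \<Rightarrow> real" where "pos x = max x 0"
definition neg :: "real \<Rightarrow> real" where "neg x = max (- x) 0"

text \<open>A semi-static portfolio for T = 1:
  p00 = phi^0_0, p10 = phi^1_0 (reals), p01 = phi^0_1 and p11 = phi^1_1 (functions of the
  observed time-1 prices (sb, sC, sa)), and h i = phi^{1,i} (number of calls with strike K i
  bought at time 0, i = 1..N).\<close>
record portfolio =
  p00 :: real
  p10 :: real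
  p01 :: "real \<Rightarrow> real \<Rightarrow> real \<Rightarrow> real"
  p11 :: "real \<Rightarrow> real \<Rightarrow> real \<Rightarrow> real"
  h   :: "nat \<Rightarrow> real"

definition borel_portfolio :: "portfolio \<Rightarrow> bool" where
  "borel_portfolio \<Phi> \<longleftrightarrow>
     (\<lambda>x::real \<times> real \<times> real. p01 \<Phi> (fst x) (fst (snd x)) (snd (snd x))) \<in> borel_measurable borel \<and>
     (\<lambda>x::real \<times> real \<times> real. p11 \<Phi> (fst x) (fst (snd x)) (snd (snd x))) \<in> borel_measurable borel"

text \<open>Self-financing condition at time 1 (phi^0 counted in units of the bank account,
  so time-1 cash flows are converted with the discount factor D(1) = 1/B1).\<close>
definition self_financing ::
  "real \<Rightarrow> nat \<Rightarrow> (nat \<Rightarrow> real) \<Rightarrow> portfolio \<Rightarrow> bool" where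
  "self_financing B1 N K \<Phi> \<longleftrightarrow>
     (\<forall>sb sC sa. p01 \<Phi> sb sC sa =
        p00 \<Phi> + (1 / B1) *
          ((\<Sum>i=1..N. h \<Phi> i * pos (sC - K i))
           - pos (p11 \<Phi> sb sC sa - p10 \<Phi>) * sa
           + neg (p11 \<Phi> sb sC sa - p10 \<Phi>) * sb))"

definition init_value ::
  "nat \<Rightarrow> (nat \<Rightarrow> real) \<Rightarrow> (nat \<Rightarrow> real) \<Rightarrow> real \<Rightarrow> real \<Rightarrow> portfolio \<Rightarrow> real" where
  "init_value N rb ra Sb0 Sa0 \<Phi> =
     p00 \<Phi> + pos (p10 \<Phi>) * Sa0 - neg (p10 \<Phi>) * Sb0
     + (\<Sum>i=1..N. pos (h \<Phi> i) * ra i - neg (h \<Phi> i) * rb i)"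

definition admissible_prices :: "real \<Rightarrow> real \<Rightarrow> real \<Rightarrow> real \<Rightarrow> real \<Rightarrow> bool" where
  "admissible_prices eps B1 sb sC sa \<longleftrightarrow>
     0 < sb \<and> sb \<le> sC \<and> sC \<le> sa \<and> sa - sb \<le> eps * B1 \<and> sC \<ge> eps * B1"

definition model_independent_arbitrage ::
  "real \<Rightarrow> real \<Rightarrow> nat \<Rightarrow> (nat \<Rightarrow> real) \<Rightarrow> (nat \<Rightarrow> real) \<Rightarrow> (nat \<Rightarrow> real)
   \<Rightarrow> real \<Rightarrow> real \<Rightarrow> bool" where
  "model_independent_arbitrage eps B1 N K rb ra Sb0 Sa0 \<longleftrightarrow>
     (\<exists>\<Phi>. borel_portfolio \<Phi> \<and> self_financing B1 N K \<Phi> \<and>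
          init_value N rb ra Sb0 Sa0 \<Phi> < 0 \<and>
          (\<forall>sb sC sa. admissible_prices eps B1 sb sC sa \<longrightarrow>
               p01 \<Phi> sb sC sa \<ge> 0 \<and> p11 \<Phi> sb sC sa = 0))"

text \<open>Time-0 prices are the given data; for T = 1 the filtration plays no role.\<close>
definition model ::
  "real \<Rightarrow> real \<Rightarrow> nat pmf \<Rightarrow> (nat \<Rightarrow> real) \<Rightarrow> (nat \<Rightarrow> real) \<Rightarrow> (nat \<Rightarrow> real) \<Rightarrow> bool" where
  "model eps B1 M Sb SC Sa \<longleftrightarrow> finite (set_pmf M) \<and>
     (\<forall>\<omega>\<in>set_pmf M. admissible_prices eps B1 (Sb \<omega>) (SC \<omega>) (Sa \<omega>))"

definition weak_arbitrage ::
  "real \<Rightarrow> real \<Rightarrow> nat \<Rightarrow> (nat \<Rightarrow> real) \<Rightarrow> (nat \<Rightarrow> real) \<Rightarrow> (nat \<Rightarrow> real)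
   \<Rightarrow> real \<Rightarrow> real \<Rightarrow> bool" where
  "weak_arbitrage eps B1 N K rb ra Sb0 Sa0 \<longleftrightarrow>
     \<not> model_independent_arbitrage eps B1 N K rb ra Sb0 Sa0 \<and>
     (\<forall>M Sb SC Sa. model eps B1 M Sb SC Sa \<longrightarrow>
        (\<exists>\<Phi>. borel_portfolio \<Phi> \<and> self_financing B1 N K \<Phi> \<and>
             init_value N rb ra Sb0 Sa0 \<Phi> \<le> 0 \<and>
             (\<forall>\<omega>\<in>set_pmf M. p01 \<Phi> (Sb \<omega>) (SC \<omega>) (Sa \<omega>) \<ge> 0 \<and>
                              p11 \<Phi> (Sb \<omega>) (SC \<omega>) (Sa \<omega>) = 0) \<and>
             (\<exists>\<omega>\<in>set_pmf M. p01 \<Phi> (Sb \<omega>) (SC \<omega>) (Sa \<omega>) > 0)))"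

definition kx :: "real \<Rightarrow> real \<Rightarrow> (nat \<Rightarrow> real) \<Rightarrow> nat \<Rightarrow> real" where
  "kx eps B1 K i = (if i = 0 then eps else K i / B1)"
definition rbx :: "real \<Rightarrow> (nat \<Rightarrow> real) \<Rightarrow> real \<Rightarrow> nat \<Rightarrow> real" where
  "rbx eps rb Sb0 i = (if i = 0 then Sb0 - 2 * eps else rb i)"
definition rax :: "(nat \<Rightarrow> real) \<Rightarrow> real \<Rightarrow> nat \<Rightarrow> real" where
  "rax ra Sa0 i = (if i = 0 then Sa0 else ra i)"

end

theory Submission
  imports Defs
begin

lemma mono_le_aux:
  fixes t :: "nat \<Rightarrow> real"
  assumes "\<And>m. m < M \<Longrightarrow> t m < t (Suc m)"
  shows "m \<le> n \<Longrightarrow> n \<le> M \<Longrightarrow> t m \<le> t n"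
proof (induction n rule: dec_induct)
  case base then show ?case by simp
next
  case (step n) then show ?case using assms[of n] by simp
qed

lemma repr:
  fixes t v :: "nat \<Rightarrow> real" and M :: nat
  assumes tm: "\<And>m. m < M \<Longrightarrow> t m < t (Suc m)" and vM: "v M = 0"
  defines "\<sigma> \<equiv> \<lambda>m. if m = 0 then -1 else if m \<le> M then (v m - v (m-1))/(t m - t (m-1)) else (0::real)"
  shows "(\<Sum>m=0..M. \<sigma> (Suc m) - \<sigma> m) = 1"
    and "i \<le> M \<Longrightarrow> (\<Sum>m=0..M. (\<sigma> (Suc m) - \<sigma> m) * pos (t m - t i)) = v i"
proof -
  have tle: "\<And>a b. a \<le> b \<Longrightarrow> b \<le> M \<Longrightarrow> t a \<le> t b"
    using mono_le_aux[of M t] tm by blast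
  show "(\<Sum>m=0..M. \<sigma> (Suc m) - \<sigma> m) = 1"
    by (subst sum_Suc_diff) (auto simp: \<sigma>_def)
  show "i \<le> M \<Longrightarrow> (\<Sum>m=0..M. (\<sigma> (Suc m) - \<sigma> m) * pos (t m - t i)) = v i"
  proof -
  assume "i \<le> M"
  then show "(\<Sum>m=0..M. (\<sigma> (Suc m) - \<sigma> m) * pos (t m - t i)) = v i"
  proof (induction i rule: inc_induct)
    case base
    have "\<And>m. m \<in> {0..M} \<Longrightarrow> pos (t m - t M) = 0"
      using tle by (auto simp: pos_def)
    then show ?case using vM by simp
  next
    case (step n)
    define d where "d = t (Suc n) - t n"
    have dpos: "d > 0" using tm[of n] step by (simp add: d_def)
    have diff: "pos (t m - t n) - pos (t m - t (Suc n)) = (if m \<in> {Suc n..M} then d else 0)"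
      if "m \<in> {0..M}" for m
    proof (cases "Suc n \<le> m")
      case True
      have "t (Suc n) \<le> t m" using tle[OF True] that by simp
      then show ?thesis using True that dpos by (auto simp: pos_def d_def)
    next
      case False
      have "t m \<le> t n" using tle[of m n] False step by simp
      moreover have "t m \<le> t (Suc n)" using tle[of m "Suc n"] False step by simp
      ultimately show ?thesis using False by (auto simp: pos_def)
    qed
    have "(\<Sum>m=0..M. (\<sigma> (Suc m) - \<sigma> m) * pos (t m - t n))
        - (\<Sum>m=0..M. (\<sigma> (Suc m) - \<sigma> m) * pos (t m - t (Suc n)))
        = (\<Sum>m=0..M. (\<sigma> (Suc m) - \<sigma> m) * (pos (t m - t n) - pos (t m - t (Suc n))))"
      by (simp add: sum_subtractf[symmetric] right_diff_distrib)
    also have "\<dots> = (\<Sum>m=0..M. (if m \<in> {Suc n..M} then (\<sigma> (Suc m) - \<sigma> m) * d else 0))"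
      by (rule sum.cong) (auto simp: diff)
    also have "\<dots> = (\<Sum>m=Suc n..M. (\<sigma> (Suc m) - \<sigma> m) * d)"
      by (subst sum.inter_restrict[symmetric]) (auto intro: sum.cong)
    also have "\<dots> = d * (\<sigma> (Suc M) - \<sigma> (Suc n))"
      using step by (simp add: sum_distrib_left[symmetric] sum_Suc_diff mult.commute)
    also have "\<dots> = v n - v (Suc n)"
      using step dpos by (simp add: \<sigma>_def d_def field_simps)
    finally show ?case using step by simp
  qed
  qed
qed

lemma core_eta:
  fixes k ra rb g :: "nat \<Rightarrow> real" and c \<eta> :: real and N :: nat
  assumes kmono: "\<And>i j. i < j \<Longrightarrow> j \<le> N \<Longrightarrow> k i < k j"
    and ra_nn: "\<And>i. i \<le> N \<Longrightarrow> ra i \<ge> 0"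
    and ci: "\<And>i j l. i < j \<Longrightarrow> j < l \<Longrightarrow> l \<le> N \<Longrightarrow>
        (ra l - rb j) / (k l - k j) \<ge> (rb j - ra i) / (k j - k i)"
    and cii: "\<And>i l. i < l \<Longrightarrow> l \<le> N \<Longrightarrow> (ra l - rb i) / (k l - k i) \<ge> -1"
    and ciii: "\<And>i j. i < j \<Longrightarrow> j \<le> N \<Longrightarrow> rb j \<le> ra i"
    and F: "\<And>x. x \<ge> k 0 \<Longrightarrow> c + (\<Sum>i=0..N. g i * pos (x - k i)) \<ge> 0"
    and eta: "0 < \<eta>" "\<eta> \<le> 1"
  shows "c + (\<Sum>i=0..N. pos (g i) * ra i - neg (g i) * rb i)
           \<ge> - (\<eta> * (k N - k 0) * (\<Sum>i=0..N. pos (g i)))"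
proof -
  have kle: "\<And>i j. i \<le> j \<Longrightarrow> j \<le> N \<Longrightarrow> k i \<le> k j"
    using kmono by (metis order_le_less)
  define D where "D = k N - k 0"
  have D0: "D \<ge> 0" using kle[of 0 N] by (simp add: D_def)
  define \<beta> where "\<beta> j = Max (insert (-1) ((\<lambda>i. (rb j - ra i)/(k j - k i)) ` {..<j}))" for j
  define \<gamma> where "\<gamma> j = min (\<beta> j) (-\<eta>)" for j
  define lin where "lin j x = rb j + \<gamma> j * (x - k j)" for j x
  define J where "J = {j. j \<le> N \<and> g j < 0}"
  define C where "C x = Max (insert 0 ((\<lambda>j. lin j x) ` J))" for x
  have finJ: "finite J" unfolding J_def by simp
  have C0: "C x \<ge> 0" for x unfolding C_def using finJ by simp
  have Cge: "j \<in> J \<Longrightarrow> lin j x \<le> C x" for j x unfolding C_def using finJ by simp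
  have Cle: "C x \<le> b" if "0 \<le> b" "\<And>j. j \<in> J \<Longrightarrow> lin j x \<le> b" for x b
    unfolding C_def using finJ that by simp
  have b1: "\<beta> j \<ge> -1" for j unfolding \<beta>_def by simp
  have b2: "\<beta> j \<le> 0" if "j \<le> N" for j
    unfolding \<beta>_def using that
    by (auto intro!: divide_nonpos_pos simp: ciii kmono)
  have b3: "\<beta> j \<ge> (rb j - ra i)/(k j - k i)" if "i < j" for i j
    unfolding \<beta>_def using that by simp
  have b4: "\<beta> j \<le> (ra l - rb j)/(k l - k j)" if "j < l" "l \<le> N" for j l
    unfolding \<beta>_def using that by (auto simp: ci cii)
  have g1: "\<gamma> j \<ge> -1" for j using b1 eta by (simp add: \<gamma>_def)
  have g2: "\<gamma> j \<le> -\<eta>" "\<gamma> j \<le> \<beta> j" for j by (auto simp: \<gamma>_def)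
  have g3: "\<gamma> j \<ge> \<beta> j - \<eta>" if "j \<le> N" for j using b2[OF that] eta by (simp add: \<gamma>_def)
  have Cup: "C (k i) \<le> ra i + \<eta> * D" if "i \<le> N" "g i > 0" for i
  proof (rule Cle)
    show "0 \<le> ra i + \<eta> * D" using ra_nn[OF that(1)] D0 eta by simp
  next
    fix j assume "j \<in> J"
    then have jN: "j \<le> N" and gj: "g j < 0" by (auto simp: J_def)
    then have "j \<noteq> i" using that by auto
    then consider "j < i" | "i < j" by linarith
    then show "lin j (k i) \<le> ra i + \<eta> * D"
    proof cases
      case 1
      have d: "k i - k j > 0" using kmono[OF 1 that(1)] by simp
      have "\<gamma> j * (k i - k j) \<le> \<beta> j * (k i - k j)" using g2 d by (intro mult_right_mono) auto
      also have "\<dots> \<le> (ra i - rb j)/(k i - k j) * (k i - k j)"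
        using b4[OF 1 that(1)] d by (intro mult_right_mono) auto
      also have "\<dots> = ra i - rb j" using d by simp
      finally have "\<gamma> j * (k i - k j) \<le> ra i - rb j" .
      moreover have "\<eta> * D \<ge> 0" using D0 eta by simp
      ultimately show ?thesis unfolding lin_def by linarith
    next
      case 2
      have d: "k j - k i > 0" using kmono[OF 2 jN] by simp
      have dD: "k j - k i \<le> D" using kle[of j N] kle[of 0 i] jN that by (simp add: D_def)
      have "(rb j - ra i) / (k j - k i) * (k j - k i) \<le> \<beta> j * (k j - k i)"
        using b3[OF 2] d by (intro mult_right_mono) auto
      then have e1: "rb j - ra i \<le> \<beta> j * (k j - k i)" using d by simp
      have "(\<beta> j - \<eta>) * (k j - k i) \<le> \<gamma> j * (k j - k i)"
        using g3[OF jN] d by (intro mult_right_mono) auto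
      moreover have "\<eta> * (k j - k i) \<le> \<eta> * D" using dD eta by simp
      ultimately show ?thesis using e1 by (simp add: lin_def algebra_simps)
    qed
  qed
  have Clow: "C (k j) \<ge> rb j" if "j \<in> J" for j using Cge[OF that, of "k j"] by (simp add: lin_def)
  have Cconv: "C y * (z - x) \<le> C x * (z - y) + C z * (y - x)" if "x < y" "y < z" for x y z
  proof -
    have "C y \<le> (C x * (z - y) + C z * (y - x)) / (z - x)"
    proof (rule Cle)
      show "0 \<le> (C x * (z - y) + C z * (y - x)) / (z - x)"
        using that C0 by (intro divide_nonneg_pos add_nonneg_nonneg mult_nonneg_nonneg) auto
    next
      fix j assume j: "j \<in> J"
      have "lin j y * (z - x) = lin j x * (z - y) + lin j z * (y - x)"
        by (simp add: lin_def algebra_simps)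
      also have "\<dots> \<le> C x * (z - y) + C z * (y - x)"
        using Cge[OF j] that by (intro add_mono mult_right_mono) auto
      finally show "lin j y \<le> (C x * (z - y) + C z * (y - x)) / (z - x)"
        using that by (simp add: pos_le_divide_eq)
    qed
    then show ?thesis using that by (simp add: pos_le_divide_eq)
  qed
  have Cslope: "C x \<le> C y + (y - x)" if "x < y" for x y
  proof (rule Cle)
    show "0 \<le> C y + (y - x)" using C0[of y] that by simp
  next
    fix j assume j: "j \<in> J"
    have "-1 * (y - x) \<le> \<gamma> j * (y - x)" using g1 that by (intro mult_right_mono) auto
    then have "lin j x \<le> lin j y + (y - x)" by (simp add: lin_def algebra_simps)
    then show "lin j x \<le> C y + (y - x)" using Cge[OF j, of y] by simp
  qed
  define Y where "Y = k N + 1 + (\<Sum>j=0..N. \<bar>rb j\<bar>) / \<eta>"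
  have sumabs: "(\<Sum>j=0..N. \<bar>rb j\<bar>) \<ge> 0" by (simp add: sum_nonneg)
  have "(\<Sum>j=0..N. \<bar>rb j\<bar>) / \<eta> \<ge> 0" using sumabs eta by simp
  then have YN: "Y > k N" unfolding Y_def by linarith
  have CY: "C Y = 0"
  proof -
    have "C Y \<le> 0"
    proof (rule Cle)
      fix j assume j: "j \<in> J"
      then have jN: "j \<le> N" by (simp add: J_def)
      have "\<bar>rb j\<bar> \<le> (\<Sum>j=0..N. \<bar>rb j\<bar>)"
        using jN by (intro member_le_sum) auto
      then have "\<bar>rb j\<bar> / \<eta> \<le> (\<Sum>j=0..N. \<bar>rb j\<bar>) / \<eta>" using eta
        by (simp add: divide_right_mono)
      then have "\<bar>rb j\<bar> / \<eta> \<le> Y - k j" using kle[of j N] jN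
        unfolding Y_def by linarith
      then have a: "\<bar>rb j\<bar> \<le> \<eta> * (Y - k j)" using eta by (simp add: pos_divide_le_eq mult.commute)
      have "\<gamma> j * (Y - k j) \<le> -\<eta> * (Y - k j)"
        using g2 YN kle[of j N] jN by (intro mult_right_mono) auto
      then show "lin j Y \<le> 0" using a by (simp add: lin_def)
    qed simp
    then show ?thesis using C0[of Y] by simp
  qed
  define t where "t m = (if m \<le> N then k m else Y)" for m
  define v where "v m = C (t m)" for m
  define \<sigma> where "\<sigma> \<equiv> \<lambda>m. if m = 0 then -1 else if m \<le> Suc N then (v m - v (m-1))/(t m - t (m-1)) else (0::real)"
  define w where "w m = \<sigma> (Suc m) - \<sigma> m" for m
  have tm: "t m < t (Suc m)" if "m < Suc N" for m
  proof (cases "Suc m \<le> N")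
    case True then show ?thesis using kmono[of m "Suc m"] by (simp add: t_def)
  next
    case False then have "m = N" using that by simp
    then show ?thesis using YN by (simp add: t_def)
  qed
  have vM: "v (Suc N) = 0" by (simp add: v_def t_def CY)
  have wsum: "(\<Sum>m=0..Suc N. w m) = 1"
    using repr(1)[of "Suc N" t v, OF tm vM] by (simp add: w_def \<sigma>_def)
  have wrep: "(\<Sum>m=0..Suc N. w m * pos (t m - t i)) = v i" if "i \<le> Suc N" for i
    using repr(2)[of "Suc N" t v i, OF tm vM that] by (simp add: w_def \<sigma>_def)
  have wnn: "w m \<ge> 0" if mle: "m \<le> Suc N" for m
  proof -
    consider "m = 0" | "0 < m" "m \<le> N" | "m = Suc N" using mle by (metis le_SucE neq0_conv)
    then show ?thesis
    proof cases
      case 1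
      have "t 0 < t 1" using tm[of 0] by simp
      moreover have "v 0 \<le> v 1 + (t 1 - t 0)" using Cslope[of "t 0" "t 1"] tm[of 0] by (simp add: v_def)
      ultimately have "(v 1 - v 0) / (t 1 - t 0) \<ge> -1" by (simp add: field_simps)
      then show ?thesis using 1 by (simp add: w_def \<sigma>_def)
    next
      case 2
      have a: "t (m - 1) < t m" using tm[of "m-1"] 2 by simp
      have b: "t m < t (Suc m)" using tm[of m] 2 by simp
      have "v m * (t (Suc m) - t (m-1)) \<le> v (m-1) * (t (Suc m) - t m) + v (Suc m) * (t m - t (m-1))"
        using Cconv[OF a b] by (simp add: v_def)
      then have "(v m - v (m-1)) / (t m - t (m-1)) \<le> (v (Suc m) - v m) / (t (Suc m) - t m)"
        using a b by (simp add: field_simps)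
      then show ?thesis using 2 by (simp add: w_def \<sigma>_def)
    next
      case 3
      have "t N < t (Suc N)" using tm[of N] by simp
      moreover have "v (Suc N) = 0" by (rule vM)
      moreover have "v N \<ge> 0" by (simp add: v_def C0)
      ultimately have "(v (Suc N) - v N) / (t (Suc N) - t N) \<le> 0"
        by (simp add: divide_nonpos_pos)
      then show ?thesis using 3 by (simp add: w_def \<sigma>_def)
    qed
  qed
  define Fx where "Fx x = c + (\<Sum>i=0..N. g i * pos (x - k i))" for x
  have Ft: "Fx (t m) \<ge> 0" for m
  proof -
    have "t m \<ge> k 0" using kle[of 0 m] kle[of 0 N] YN by (auto simp: t_def)
    then show ?thesis using F by (simp add: Fx_def)
  qed
  have "(\<Sum>m=0..Suc N. w m * Fx (t m)) \<ge> 0"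
    using wnn Ft by (intro sum_nonneg mult_nonneg_nonneg) auto
  also have "(\<Sum>m=0..Suc N. w m * Fx (t m))
      = c * (\<Sum>m=0..Suc N. w m) + (\<Sum>m=0..Suc N. \<Sum>i=0..N. g i * (w m * pos (t m - t i)))"
    by (simp add: Fx_def algebra_simps sum_distrib_left sum.distrib t_def)
  also have "\<dots> = c + (\<Sum>i=0..N. g i * (\<Sum>m=0..Suc N. w m * pos (t m - t i)))"
  proof -
    have "(\<Sum>m=0..Suc N. \<Sum>i=0..N. g i * (w m * pos (t m - t i)))
        = (\<Sum>i=0..N. \<Sum>m=0..Suc N. g i * (w m * pos (t m - t i)))"
      by (rule sum.swap)
    also have "\<dots> = (\<Sum>i=0..N. g i * (\<Sum>m=0..Suc N. w m * pos (t m - t i)))"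
      by (simp only: sum_distrib_left)
    finally show ?thesis by (simp only: wsum mult_1_right)
  qed
  also have "\<dots> = c + (\<Sum>i=0..N. g i * C (k i))"
  proof -
    have "(\<Sum>m=0..Suc N. w m * pos (t m - t i)) = C (k i)" if "i \<in> {0..N}" for i
      using wrep[of i] that by (simp add: v_def t_def)
    then show ?thesis by simp
  qed
  finally have main: "c + (\<Sum>i=0..N. g i * C (k i)) \<ge> 0" .
  have trm: "pos (g i) * ra i - neg (g i) * rb i \<ge> g i * C (k i) - \<eta> * D * pos (g i)"
    if "i \<le> N" for i
  proof (cases "g i > 0")
    case True
    have "g i * C (k i) \<le> g i * (ra i + \<eta> * D)" using Cup[OF that True] True by simp
    then show ?thesis using True by (simp add: pos_def neg_def algebra_simps)
  next
    case False
    show ?thesis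
    proof (cases "g i = 0")
      case True then show ?thesis by (simp add: pos_def neg_def)
    next
      case False2: False
      then have gi: "g i < 0" using False by simp
      then have "i \<in> J" using that by (simp add: J_def)
      then have "rb i \<le> C (k i)" by (rule Clow)
      then have "g i * C (k i) \<le> g i * rb i" using gi by (simp add: mult_le_cancel_left)
      then show ?thesis using gi by (simp add: pos_def neg_def)
    qed
  qed
  have "(\<Sum>i=0..N. g i * C (k i) - \<eta> * D * pos (g i)) \<le> (\<Sum>i=0..N. pos (g i) * ra i - neg (g i) * rb i)"
    by (intro sum_mono trm) auto
  then have "(\<Sum>i=0..N. g i * C (k i)) - \<eta> * D * (\<Sum>i=0..N. pos (g i)) \<le> (\<Sum>i=0..N. pos (g i) * ra i - neg (g i) * rb i)"
    by (simp add: sum_subtractf sum_distrib_left)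
  then show ?thesis using main by (simp add: D_def)
qed

lemma core:
  fixes k ra rb g :: "nat \<Rightarrow> real" and c :: real and N :: nat
  assumes N1: "N \<ge> 1"
    and kmono: "\<And>i j. i < j \<Longrightarrow> j \<le> N \<Longrightarrow> k i < k j"
    and ra_nn: "\<And>i. i \<le> N \<Longrightarrow> ra i \<ge> 0"
    and ci: "\<And>i j l. i < j \<Longrightarrow> j < l \<Longrightarrow> l \<le> N \<Longrightarrow>
        (ra l - rb j) / (k l - k j) \<ge> (rb j - ra i) / (k j - k i)"
    and cii: "\<And>i l. i < l \<Longrightarrow> l \<le> N \<Longrightarrow> (ra l - rb i) / (k l - k i) \<ge> -1"
    and ciii: "\<And>i j. i < j \<Longrightarrow> j \<le> N \<Longrightarrow> rb j \<le> ra i"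
    and F: "\<And>x. x > k 0 \<Longrightarrow> c + (\<Sum>i=0..N. g i * pos (x - k i)) \<ge> 0"
  shows "c + (\<Sum>i=0..N. pos (g i) * ra i - neg (g i) * rb i) \<ge> 0"
proof -
  have kle: "\<And>i j. i \<le> j \<Longrightarrow> j \<le> N \<Longrightarrow> k i \<le> k j"
    using kmono by (metis order_le_less)
  have k01: "k 0 < k 1" using kmono[of 0 1] N1 by simp
  have lin: "(\<Sum>i=0..N. g i * pos (x - k i)) = g 0 * (x - k 0)" if "k 0 \<le> x" "x \<le> k 1" for x
  proof -
    have "(\<Sum>i=Suc 0..N. g i * pos (x - k i)) = 0"
    proof (rule sum.neutral, intro ballI)
      fix i assume "i \<in> {Suc 0..N}"
      then have "k 1 \<le> k i" using kle[of 1 i] by simp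
      then show "g i * pos (x - k i) = 0" using that by (simp add: pos_def)
    qed
    then show ?thesis using that by (simp add: sum.atLeast_Suc_atMost pos_def)
  qed
  have c0: "c \<ge> 0"
  proof (rule ccontr)
    assume "\<not> c \<ge> 0"
    then have cn: "c < 0" by simp
    define p where "p = g 0"
    define d where "d = min ((k 1 - k 0)/2) ((-c)/(2*(\<bar>p\<bar>+1)))"
    have "(-c)/(2*(\<bar>p\<bar>+1)) > 0" using cn by (intro divide_pos_pos) auto
    then have dpos: "d > 0" using k01 by (simp add: d_def)
    have dle: "d \<le> (-c)/(2*(\<bar>p\<bar>+1))" by (simp add: d_def)
    have "d \<le> (k 1 - k 0)/2" unfolding d_def by (rule min.cobounded1)
    then have "k 0 + d \<le> k 1" using k01 by (simp add: field_simps)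
    then have "c + p * d \<ge> 0" using F[of "k 0 + d"] lin[of "k 0 + d"] dpos by (simp add: p_def)
    moreover have "\<bar>p\<bar> * d \<le> -c/2"
    proof -
      have "\<bar>p\<bar> * d \<le> (\<bar>p\<bar>+1) * d" using dpos by simp
      also have "\<dots> \<le> (\<bar>p\<bar>+1) * ((-c)/(2*(\<bar>p\<bar>+1)))"
        using dle by (intro mult_left_mono) auto
      also have "\<dots> = -c/2" by (simp add: field_simps)
      finally show ?thesis .
    qed
    moreover have "p * d \<le> \<bar>p\<bar> * d" using dpos by (simp add: mult_right_mono)
    ultimately show False using cn by linarith
  qed
  have F': "c + (\<Sum>i=0..N. g i * pos (x - k i)) \<ge> 0" if "x \<ge> k 0" for x
  proof (cases "x = k 0")
    case True
    have "(\<Sum>i=0..N. g i * pos (x - k i)) = 0"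
      by (rule sum.neutral) (use True kle[of 0] in \<open>auto simp: pos_def\<close>)
    then show ?thesis using c0 by simp
  next
    case False then show ?thesis using F that by simp
  qed
  define cost where "cost = c + (\<Sum>i=0..N. pos (g i) * ra i - neg (g i) * rb i)"
  define DS where "DS = (k N - k 0) * (\<Sum>i=0..N. pos (g i))"
  have DS0: "DS \<ge> 0" unfolding DS_def using kle[of 0 N]
    by (intro mult_nonneg_nonneg sum_nonneg) (auto simp: pos_def)
  have E: "cost \<ge> - (\<eta> * DS)" if "0 < \<eta>" "\<eta> \<le> 1" for \<eta>
    using core_eta[OF kmono ra_nn ci cii ciii F' that] unfolding cost_def DS_def
    by (simp add: mult.assoc)
  show ?thesis
  proof (rule ccontr)
    assume "\<not> ?thesis"
    then have cn: "cost < 0" by (simp add: cost_def)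
    define \<eta> where "\<eta> = min 1 ((-cost)/(2*(DS+1)))"
    have "(-cost)/(2*(DS+1)) > 0" using cn DS0 by (intro divide_pos_pos) auto
    then have "\<eta> > 0" "\<eta> \<le> 1" by (auto simp: \<eta>_def)
    then have e: "cost \<ge> - (\<eta> * DS)" by (rule E)
    have "\<eta> * DS \<le> ((-cost)/(2*(DS+1))) * (DS + 1)"
      using DS0 `\<eta> > 0` by (intro mult_mono) (auto simp: \<eta>_def)
    also have "\<dots> = -cost/2" using DS0 by (simp add: field_simps)
    finally show False using e cn by linarith
  qed
qed

definition mkP :: "real \<Rightarrow> nat \<Rightarrow> (nat \<Rightarrow> real) \<Rightarrow> real \<Rightarrow> real \<Rightarrow> (nat \<Rightarrow> real) \<Rightarrow> portfolio" where
  "mkP B1 N K a b H = \<lparr>p00 = a, p10 = b,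
     p01 = (\<lambda>sb sC sa. a + (1/B1) * ((\<Sum>i=1..N. H i * pos (sC - K i)) - pos (0 - b) * sa + neg (0 - b) * sb)),
     p11 = (\<lambda>_ _ _. 0), h = H\<rparr>"

lemma mkP_borel: "borel_portfolio (mkP B1 N K a b H)"
  unfolding borel_portfolio_def mkP_def pos_def neg_def portfolio.select_convs
  by (intro conjI borel_measurable_continuous_onI continuous_on_add continuous_on_const continuous_on_mult_left continuous_intros)

lemma mkP_sf: "self_financing B1 N K (mkP B1 N K a b H)"
  unfolding self_financing_def mkP_def by (simp only: portfolio.select_convs) simp

lemma mkP_init: "init_value N rb ra Sb0 Sa0 (mkP B1 N K a b H) =
   a + pos b * Sa0 - neg b * Sb0 + (\<Sum>i=1..N. pos (H i) * ra i - neg (H i) * rb i)"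
  unfolding init_value_def mkP_def by simp

lemma mkP_pay: "p01 (mkP B1 N K a b H) sb sC sa =
   a + (1/B1) * ((\<Sum>i=1..N. H i * pos (sC - K i)) - pos (0 - b) * sa + neg (0 - b) * sb)"
  "p11 (mkP B1 N K a b H) sb sC sa = 0"
  unfolding mkP_def by simp_all

lemma sum_two:
  fixes f :: "nat \<Rightarrow> real"
  assumes "finite S" "i \<in> S" "j \<in> S" "i \<noteq> j" "\<And>n. n \<in> S \<Longrightarrow> n \<noteq> i \<Longrightarrow> n \<noteq> j \<Longrightarrow> f n = 0"
  shows "sum f S = f i + f j"
proof -
  have "sum f S = f i + sum f (S - {i})" using assms by (simp add: sum.remove)
  also have "sum f (S - {i}) = f j + sum f (S - {i} - {j})"
    using assms by (intro sum.remove) auto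
  also have "sum f (S - {i} - {j}) = 0" using assms by (intro sum.neutral) auto
  finally show ?thesis by simp
qed

lemma pos_scale: "B > 0 \<Longrightarrow> pos (x * B - K) = B * pos (x - K / B)"
proof -
  assume B: "B > 0"
  have "x * B - K = B * (x - K / B)" using B by (simp add: field_simps)
  then show ?thesis using B by (simp add: pos_def max_def mult_le_0_iff)
qed

theorem mainTheorem4:
  fixes eps B1 Sb0 Sa0 :: real and N :: nat and K rb ra :: "nat \<Rightarrow> real"
  assumes B1_pos: "B1 > 0"
    and eps_nonneg: "eps \<ge> 0"
    and K_pos: "N \<ge> 1 \<longrightarrow> K 1 > 0"
    and K_mono: "\<And>i j. 1 \<le> i \<Longrightarrow> i < j \<Longrightarrow> j \<le> N \<Longrightarrow> K i < K j"
    and r_pos: "\<And>i. 1 \<le> i \<Longrightarrow> i \<le> N \<Longrightarrow> rb i > 0 \<and> ra i > 0"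
    and S0: "0 < Sb0" "Sb0 \<le> Sa0"
    and k1: "kx eps B1 K 1 > eps"
    and cond_i: "\<And>i j l. i < j \<Longrightarrow> j < l \<Longrightarrow> l \<le> N \<Longrightarrow>
        (rax ra Sa0 l - rbx eps rb Sb0 j) / (kx eps B1 K l - kx eps B1 K j)
          \<ge> (rbx eps rb Sb0 j - rax ra Sa0 i) / (kx eps B1 K j - kx eps B1 K i)"
    and cond_ii: "\<And>i l. i < l \<Longrightarrow> l \<le> N \<Longrightarrow>
        (rax ra Sa0 l - rbx eps rb Sb0 i) / (kx eps B1 K l - kx eps B1 K i) \<ge> -1"
    and cond_iii: "\<And>i j. i < j \<Longrightarrow> j \<le> N \<Longrightarrow> rbx eps rb Sb0 j \<le> rax ra Sa0 i"
    and tight: "\<exists>i j. i < j \<and> j \<le> N \<and> rax ra Sa0 i = rbx eps rb Sb0 j \<and> rbx eps rb Sb0 j > 0"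
  shows "weak_arbitrage eps B1 N K rb ra Sb0 Sa0"
proof -
  obtain i0 j0 where tj: "i0 < j0" "j0 \<le> N" "rax ra Sa0 i0 = rbx eps rb Sb0 j0" "rbx eps rb Sb0 j0 > 0"
    using tight by blast
  have N1: "N \<ge> 1" using tj by simp
  have j01: "j0 \<ge> 1" using tj by simp
  have rbj: "rbx eps rb Sb0 j0 = rb j0" using j01 by (simp add: rbx_def)
  have kx0: "kx eps B1 K 0 = eps" by (simp add: kx_def)
  have kxi: "\<And>i. i \<noteq> 0 \<Longrightarrow> kx eps B1 K i = K i / B1" by (simp add: kx_def)
  have K1: "K 1 / B1 > eps" using k1 by (simp add: kx_def)
  have Kmono': "\<And>i j. 1 \<le> i \<Longrightarrow> i \<le> j \<Longrightarrow> j \<le> N \<Longrightarrow> K i \<le> K j"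
    using K_mono by (metis order_le_less)
  have Kgt: "K j > eps * B1" if "1 \<le> j" "j \<le> N" for j
  proof -
    have "eps * B1 < K 1" using K1 B1_pos by (simp add: pos_less_divide_eq)
    also have "K 1 \<le> K j" using Kmono'[of 1 j] that by simp
    finally show ?thesis .
  qed
  have kmono: "kx eps B1 K i < kx eps B1 K j" if "i < j" "j \<le> N" for i j
  proof (cases "i = 0")
    case True
    have "eps * B1 < K j" using Kgt[of j] that by simp
    then show ?thesis using True that B1_pos by (simp add: kx_def pos_less_divide_eq)
  next
    case False
    then show ?thesis using K_mono[of i j] that B1_pos by (simp add: kx_def divide_strict_right_mono)
  qed
  have ra_nn: "rax ra Sa0 i \<ge> 0" if "i \<le> N" for i
    using r_pos[of i] S0 that by (cases "i = 0") (auto simp: rax_def)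
  have noMI: "\<not> model_independent_arbitrage eps B1 N K rb ra Sb0 Sa0"
  proof
    assume "model_independent_arbitrage eps B1 N K rb ra Sb0 Sa0"
    then obtain \<Phi> where sf: "self_financing B1 N K \<Phi>"
      and neg0: "init_value N rb ra Sb0 Sa0 \<Phi> < 0"
      and adm: "\<And>sb sC sa. admissible_prices eps B1 sb sC sa \<Longrightarrow> p01 \<Phi> sb sC sa \<ge> 0 \<and> p11 \<Phi> sb sC sa = 0"
      unfolding model_independent_arbitrage_def by blast
    define P where "P = p10 \<Phi>"
    define H where "H = h \<Phi>"
    define c where "c = p00 \<Phi> - 2 * neg P * eps"
    define g where "g i = (if i = 0 then P else H i)" for i
    have sumsplit: "(\<Sum>i=0..N. g i * pos (x - kx eps B1 K i)) = P * pos (x - eps) + (\<Sum>i=1..N. H i * pos (x - K i / B1))" for x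
    proof -
      have "(\<Sum>i=Suc 0..N. g i * pos (x - kx eps B1 K i)) = (\<Sum>i=1..N. H i * pos (x - K i / B1))"
        by (rule sum.cong) (auto simp: g_def kx_def)
      then show ?thesis by (simp add: sum.atLeast_Suc_atMost g_def kx_def)
    qed
    have pay: "p01 \<Phi> sb sC sa = p00 \<Phi> + (1/B1) * ((\<Sum>i=1..N. H i * pos (sC - K i)) - pos (0 - P) * sa + neg (0 - P) * sb)"
      if "admissible_prices eps B1 sb sC sa" for sb sC sa
      using sf adm[OF that] unfolding self_financing_def P_def H_def by simp
    have scale: "(1/B1) * (\<Sum>i=1..N. H i * pos (x * B1 - K i)) = (\<Sum>i=1..N. H i * pos (x - K i / B1))" for x
      using B1_pos by (simp add: pos_scale sum_distrib_left)
    have F: "c + (\<Sum>i=0..N. g i * pos (x - kx eps B1 K i)) \<ge> 0" if "x > kx eps B1 K 0" for x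
    proof -
      have x: "x > eps" using that by (simp add: kx_def)
      have xB: "x * B1 > eps * B1" using x B1_pos by simp
      have px: "pos (x - eps) = x - eps" using x by (simp add: pos_def)
      show ?thesis
      proof (cases "P \<ge> 0")
        case True
        have ad: "admissible_prices eps B1 (x*B1 - eps*B1) (x*B1) (x*B1)"
          unfolding admissible_prices_def using xB eps_nonneg B1_pos by simp
        have "0 \<le> p01 \<Phi> (x*B1 - eps*B1) (x*B1) (x*B1)" using adm[OF ad] by simp
        also have "\<dots> = p00 \<Phi> + (1/B1) * ((\<Sum>i=1..N. H i * pos (x*B1 - K i)) + P * (x*B1 - eps*B1))"
          using pay[OF ad] True by (simp add: pos_def neg_def)
        also have "\<dots> = p00 \<Phi> + (\<Sum>i=1..N. H i * pos (x - K i / B1)) + P * (x - eps)"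
          using B1_pos scale[of x] by (simp add: distrib_left field_simps)
        also have "\<dots> = c + (\<Sum>i=0..N. g i * pos (x - kx eps B1 K i))"
          using True by (simp add: sumsplit px c_def neg_def)
        finally show ?thesis .
      next
        case False
        have ad: "admissible_prices eps B1 (x*B1) (x*B1) (x*B1 + eps*B1)"
          unfolding admissible_prices_def using xB eps_nonneg B1_pos x by (simp add: mult_nonneg_nonneg)
        have "0 \<le> p01 \<Phi> (x*B1) (x*B1) (x*B1 + eps*B1)" using adm[OF ad] by simp
        also have "\<dots> = p00 \<Phi> + (1/B1) * ((\<Sum>i=1..N. H i * pos (x*B1 - K i)) + P * (x*B1 + eps*B1))"
          using pay[OF ad] False by (simp add: pos_def neg_def)
        also have "\<dots> = p00 \<Phi> + (\<Sum>i=1..N. H i * pos (x - K i / B1)) + P * (x + eps)"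
          using B1_pos scale[of x] by (simp add: distrib_left field_simps)
        also have "\<dots> = c + (\<Sum>i=0..N. g i * pos (x - kx eps B1 K i))"
          using False by (simp add: sumsplit px c_def neg_def algebra_simps)
        finally show ?thesis .
      qed
    qed
    have "c + (\<Sum>i=0..N. pos (g i) * rax ra Sa0 i - neg (g i) * rbx eps rb Sb0 i) \<ge> 0"
      by (rule core[OF N1 kmono ra_nn cond_i cond_ii cond_iii F])
    moreover have "c + (\<Sum>i=0..N. pos (g i) * rax ra Sa0 i - neg (g i) * rbx eps rb Sb0 i)
        = init_value N rb ra Sb0 Sa0 \<Phi>"
    proof -
      have "(\<Sum>i=Suc 0..N. pos (g i) * rax ra Sa0 i - neg (g i) * rbx eps rb Sb0 i)
          = (\<Sum>i=1..N. pos (H i) * ra i - neg (H i) * rb i)"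
        by (rule sum.cong) (auto simp: g_def rax_def rbx_def)
      then show ?thesis
        by (simp add: sum.atLeast_Suc_atMost init_value_def c_def g_def rax_def rbx_def P_def H_def algebra_simps)
    qed
    ultimately show False using neg0 by simp
  qed
  have WA: "\<exists>\<Phi>. borel_portfolio \<Phi> \<and> self_financing B1 N K \<Phi> \<and>
             init_value N rb ra Sb0 Sa0 \<Phi> \<le> 0 \<and>
             (\<forall>\<omega>\<in>set_pmf M. p01 \<Phi> (Sb \<omega>) (SC \<omega>) (Sa \<omega>) \<ge> 0 \<and>
                              p11 \<Phi> (Sb \<omega>) (SC \<omega>) (Sa \<omega>) = 0) \<and>
             (\<exists>\<omega>\<in>set_pmf M. p01 \<Phi> (Sb \<omega>) (SC \<omega>) (Sa \<omega>) > 0)"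
    if mod: "model eps B1 M Sb SC Sa" for M Sb SC Sa
  proof -
    have admM: "\<And>\<omega>. \<omega> \<in> set_pmf M \<Longrightarrow> admissible_prices eps B1 (Sb \<omega>) (SC \<omega>) (Sa \<omega>)"
      using mod by (simp add: model_def)
    obtain \<omega>0 where \<omega>0: "\<omega>0 \<in> set_pmf M" using set_pmf_not_empty by fastforce
    have rbpos: "rb j0 > 0" using tj rbj by simp
    show ?thesis
    proof (cases "i0 = 0")
      case True
      have Sa0j: "Sa0 = rb j0" using tj True rbj by (simp add: rax_def)
      define H where "H n = (if n = j0 then -1 else (0::real))" for n
      define \<Phi> where "\<Phi> = mkP B1 N K 0 1 H"
      have jS: "j0 \<in> {1..N}" using j01 tj by simp
      have init: "init_value N rb ra Sb0 Sa0 \<Phi> = 0"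
      proof -
        have "(\<Sum>i=1..N. pos (H i) * ra i - neg (H i) * rb i) = (\<Sum>i=1..N. if i = j0 then - rb j0 else 0)"
          by (rule sum.cong) (auto simp: H_def pos_def neg_def)
        also have "\<dots> = - rb j0" using jS by (simp add: sum.delta')
        finally show ?thesis unfolding \<Phi>_def mkP_init using Sa0j by (simp add: pos_def neg_def)
      qed
      have payw: "p01 \<Phi> (Sb \<omega>) (SC \<omega>) (Sa \<omega>) > 0" if w: "\<omega> \<in> set_pmf M" for \<omega>
      proof -
        have ad: "admissible_prices eps B1 (Sb \<omega>) (SC \<omega>) (Sa \<omega>)" by (rule admM[OF w])
        have "(\<Sum>i=1..N. H i * pos (SC \<omega> - K i)) = (\<Sum>i=1..N. if i = j0 then - pos (SC \<omega> - K j0) else 0)"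
          by (rule sum.cong) (auto simp: H_def)
        also have "\<dots> = - pos (SC \<omega> - K j0)" using jS by (simp add: sum.delta')
        finally have s: "(\<Sum>i=1..N. H i * pos (SC \<omega> - K i)) = - pos (SC \<omega> - K j0)" .
        have "Sb \<omega> - pos (SC \<omega> - K j0) > 0"
        proof (cases "SC \<omega> \<le> K j0")
          case True then show ?thesis using ad by (simp add: pos_def admissible_prices_def)
        next
          case False
          have "K j0 > eps * B1" using Kgt j01 tj by simp
          then show ?thesis using False ad by (simp add: pos_def admissible_prices_def)
        qed
        then show ?thesis unfolding \<Phi>_def mkP_pay s using B1_pos by (simp add: pos_def neg_def)
      qed
      show ?thesis
        apply (rule exI[of _ \<Phi>])
        using init payw \<omega>0 by (auto simp: \<Phi>_def mkP_borel mkP_sf mkP_pay(2) less_imp_le)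
    next
      case False
      have i1: "i0 \<ge> 1" using False by simp
      have raij: "ra i0 = rb j0" using tj False rbj by (simp add: rax_def)
      have iS: "i0 \<in> {1..N}" and jS: "j0 \<in> {1..N}" using i1 tj by auto
      have Kij: "K i0 < K j0" using K_mono[of i0 j0] i1 tj by simp
      show ?thesis
      proof (cases "\<exists>\<omega>\<in>set_pmf M. SC \<omega> > K i0")
        case True
        then obtain \<omega>1 where \<omega>1: "\<omega>1 \<in> set_pmf M" "SC \<omega>1 > K i0" by blast
        define H where "H n = (if n = i0 then 1 else if n = j0 then -1 else (0::real))" for n
        define \<Phi> where "\<Phi> = mkP B1 N K 0 0 H"
        have init: "init_value N rb ra Sb0 Sa0 \<Phi> = 0"
        proof -
          have "(\<Sum>i=1..N. pos (H i) * ra i - neg (H i) * rb i) = (pos (H i0) * ra i0 - neg (H i0) * rb i0) + (pos (H j0) * ra j0 - neg (H j0) * rb j0)"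
            using iS jS tj by (intro sum_two) (auto simp: H_def pos_def neg_def)
          also have "\<dots> = 0" using tj raij by (simp add: H_def pos_def neg_def)
          finally show ?thesis unfolding \<Phi>_def mkP_init by (simp add: pos_def neg_def)
        qed
        have s: "(\<Sum>i=1..N. H i * pos (x - K i)) = pos (x - K i0) - pos (x - K j0)" for x
        proof -
          have "(\<Sum>i=1..N. H i * pos (x - K i)) = H i0 * pos (x - K i0) + H j0 * pos (x - K j0)"
            using iS jS tj by (intro sum_two) (auto simp: H_def)
          then show ?thesis using tj by (simp add: H_def)
        qed
        have mono: "pos (x - K i0) - pos (x - K j0) \<ge> 0" for x using Kij by (simp add: pos_def max_def)
        have strict: "pos (x - K i0) - pos (x - K j0) > 0" if "x > K i0" for x
          using Kij that by (simp add: pos_def max_def)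
        have pe: "p01 \<Phi> sb sC sa = (1/B1) * (pos (sC - K i0) - pos (sC - K j0))" for sb sC sa
          unfolding \<Phi>_def mkP_pay s by (simp add: pos_def neg_def)
        have "p01 \<Phi> (Sb \<omega>) (SC \<omega>) (Sa \<omega>) \<ge> 0" for \<omega>
          unfolding pe using mono B1_pos by simp
        moreover have "p01 \<Phi> (Sb \<omega>1) (SC \<omega>1) (Sa \<omega>1) > 0"
          unfolding pe using strict[OF \<omega>1(2)] B1_pos by simp
        ultimately show ?thesis
          apply (intro exI[of _ \<Phi>])
          using init \<omega>1 by (auto simp: \<Phi>_def mkP_borel mkP_sf mkP_pay(2))
      next
        case False
        define H where "H n = (if n = j0 then -1 else (0::real))" for n
        define \<Phi> where "\<Phi> = mkP B1 N K (rb j0) 0 H"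
        have init: "init_value N rb ra Sb0 Sa0 \<Phi> = 0"
        proof -
          have "(\<Sum>i=1..N. pos (H i) * ra i - neg (H i) * rb i) = (\<Sum>i=1..N. if i = j0 then - rb j0 else 0)"
            by (rule sum.cong) (auto simp: H_def pos_def neg_def)
          also have "\<dots> = - rb j0" using jS by (simp add: sum.delta')
          finally show ?thesis unfolding \<Phi>_def mkP_init by (simp add: pos_def neg_def)
        qed
        have payw: "p01 \<Phi> (Sb \<omega>) (SC \<omega>) (Sa \<omega>) = rb j0" if w: "\<omega> \<in> set_pmf M" for \<omega>
        proof -
          have "SC \<omega> \<le> K i0" using False w by auto
          then have z: "pos (SC \<omega> - K j0) = 0" using Kij by (simp add: pos_def)
          have "(\<Sum>i=1..N. H i * pos (SC \<omega> - K i)) = (\<Sum>i=1..N. if i = j0 then - pos (SC \<omega> - K j0) else 0)"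
            by (rule sum.cong) (auto simp: H_def)
          also have "\<dots> = 0" using jS z by (simp add: sum.delta')
          finally show ?thesis unfolding \<Phi>_def mkP_pay by (simp add: pos_def neg_def)
        qed
        show ?thesis
          apply (rule exI[of _ \<Phi>])
          using init payw \<omega>0 rbpos by (auto simp: \<Phi>_def mkP_borel mkP_sf mkP_pay(2) less_imp_le)
      qed
    qed
  qed
  show ?thesis unfolding weak_arbitrage_def using noMI WA by blast
qed

end
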